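(* Let $L$ be a Lie algebra over a field $F$ and $\tilde L=L\otimes_FE$. Let $\Omega\subset\tilde L$ be a finite family of elements such that the family $\operatorname{ad}(\Omega)=\{\operatorname{ad}(b)\}_{b\in\Omega}$ satisfies (U1) and (U2), and suppose $U_2(\operatorname{ad}(\Omega))=0$. Then $a=\sum_{b\in\Omega}b$ is a sandwich of the Lie algebra $\tilde L$.
   Context: $E$ is the commutative associative $F$-algebra without unit generated by $e_1,e_2,\dots$ with relations $e_i^2=0$; its basis consists of $e_\pi=e_{i_1}\cdots e_{i_r}$ for nonempty finite $\pi=\{i_1<\dots<i_r\}$. $\tilde L=L\otimes_FE$ with $[x\otimes\alpha,y\otimes\beta]=[x,y]\otimes\alpha\beta$. For $D=\operatorname{Der}(L)$, $\tilde D=D\otimes_FE$ acts by derivations on $\tilde L$, and $\tilde D_i=\sum_{\pi\ni i}D\otimes e_\pi$. For $b\in\tilde L$, $\operatorname{ad}(b):x\mapsto[x,b]$ is viewed as an element of $\tilde D$. A finite family $\Omega$ of elements of $\tilde D$ satisfies (U1) if each element lies in some $\tilde D_i$, and (U2) if any two of its elements commute. For such $\Omega$, $U_k(\Omega)=\sum d_1\cdots d_k$, summed over all $k$-element subsets $\{d_1,\dots,d_k\}$ of $\Omega$; $U_0(\Omega)=\mathrm{Id}$. An element $a$ of a Lie algebra $M$ is a sandwich if $\operatorname{ad}(a)^2=0$ and $\operatorname{ad}(a)\operatorname{ad}(c)\operatorname{ad}(a)=0$ for all $c\in M$. *)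

theory Defs
  imports Main "HOL.Vector_Spaces"
begin

definition lie_algebra :: "('k::field \<Rightarrow> 'l::ab_group_add \<Rightarrow> 'l) \<Rightarrow> ('l \<Rightarrow> 'l \<Rightarrow> 'l) \<Rightarrow> bool" where
  "lie_algebra sc br \<longleftrightarrow>
     vector_space sc \<and>
     (\<forall>x y z. br (x + y) z = br x z + br y z) \<and>
     (\<forall>x y z. br x (y + z) = br x y + br x z) \<and>
     (\<forall>c x y. br (sc c x) y = sc c (br x y)) \<and>
     (\<forall>c x y. br x (sc c y) = sc c (br x y)) \<and>
     (\<forall>x. br x x = 0) \<and>
     (\<forall>x y z. br x (br y z) + br y (br z x) + br z (br x y) = 0)"

text \<open>Elements of \<open>L \<otimes>\<^sub>F E\<close>: since \<open>E\<close> has basis \<open>e\<^sub>\<pi>\<close> (\<open>\<pi>\<close> nonempty finite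
set of indices), an element \<open>\<Sum> x\<^sub>\<pi> \<otimes> e\<^sub>\<pi>\<close> is represented by its coefficient
function \<open>\<pi> \<mapsto> x\<^sub>\<pi>\<close>, finitely supported on nonempty finite sets.\<close>
definition tl_elem :: "(nat set \<Rightarrow> 'l::zero) \<Rightarrow> bool" where
  "tl_elem x \<longleftrightarrow> finite {\<pi>. x \<pi> \<noteq> 0} \<and> (\<forall>\<pi>. x \<pi> \<noteq> 0 \<longrightarrow> finite \<pi> \<and> \<pi> \<noteq> {})"

text \<open>Bracket on \<open>L\<otimes>E\<close>: \<open>e\<^sub>\<pi> e\<^sub>\<rho> = e\<^sub>\<pi>\<^sub>\<union>\<^sub>\<rho>\<close> if disjoint, else \<open>0\<close>.\<close>
definition tbr :: "('l \<Rightarrow> 'l \<Rightarrow> 'l) \<Rightarrow> (nat set \<Rightarrow> 'l::comm_monoid_add) \<Rightarrow> (nat set \<Rightarrow> 'l) \<Rightarrow> nat set \<Rightarrow> 'l" where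
  "tbr br x y \<sigma> = (if finite \<sigma> then
      (\<Sum>\<pi>\<in>{\<pi>. \<pi> \<subseteq> \<sigma> \<and> \<pi> \<noteq> {} \<and> \<pi> \<noteq> \<sigma>}. br (x \<pi>) (y (\<sigma> - \<pi>))) else 0)"

definition tad :: "('l \<Rightarrow> 'l \<Rightarrow> 'l) \<Rightarrow> (nat set \<Rightarrow> 'l::comm_monoid_add) \<Rightarrow> (nat set \<Rightarrow> 'l) \<Rightarrow> (nat set \<Rightarrow> 'l)" where
  "tad br b = (\<lambda>x. tbr br x b)"

text \<open>\<open>ad(b) = \<Sum> ad(b\<^sub>\<pi>) \<otimes> e\<^sub>\<pi>\<close> lies in \<open>D\<^sub>i = \<Sum>\<^sub>\<pi>\<^sub>\<ni>\<^sub>i D \<otimes> e\<^sub>\<pi>\<close>: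
  every component \<open>ad(b\<^sub>\<pi>)\<close> with \<open>i \<notin> \<pi>\<close> is the zero derivation.\<close>
definition ad_in_Dtilde :: "('l \<Rightarrow> 'l \<Rightarrow> 'l) \<Rightarrow> (nat set \<Rightarrow> 'l::zero) \<Rightarrow> nat \<Rightarrow> bool" where
  "ad_in_Dtilde br b i \<longleftrightarrow> (\<forall>\<pi>. i \<notin> \<pi> \<longrightarrow> (\<lambda>y. br y (b \<pi>)) = (\<lambda>y. 0))"

definition Uk :: "nat \<Rightarrow> nat set \<Rightarrow> (nat \<Rightarrow> ((nat set \<Rightarrow> 'l) \<Rightarrow> (nat set \<Rightarrow> 'l))) \<Rightarrow> (nat set \<Rightarrow> 'l::comm_monoid_add) \<Rightarrow> (nat set \<Rightarrow> 'l)" where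
  "Uk k I d = (\<lambda>x \<sigma>. \<Sum>S\<in>{S. S \<subseteq> I \<and> card S = k}.
       foldr (\<circ>) (map d (sorted_list_of_set S)) id x \<sigma>)"

definition tsandwich :: "('l \<Rightarrow> 'l \<Rightarrow> 'l) \<Rightarrow> (nat set \<Rightarrow> 'l::comm_monoid_add) \<Rightarrow> bool" where
  "tsandwich br a \<longleftrightarrow>
     (\<forall>x. tl_elem x \<longrightarrow> tad br a (tad br a x) = (\<lambda>_. 0)) \<and>
     (\<forall>c x. tl_elem c \<longrightarrow> tl_elem x \<longrightarrow> tad br a (tad br c (tad br a x)) = (\<lambda>_. 0))"

end

theory Submission
  imports Defs
begin

locale brl =
  fixes br :: "'l::ab_group_add \<Rightarrow> 'l \<Rightarrow> 'l"
  assumes add1: "\<And>x y z. br (x + y) z = br x z + br y z"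
    and add2: "\<And>x y z. br x (y + z) = br x y + br x z"
    and alt: "\<And>x. br x x = 0"
    and jac: "\<And>x y z. br x (br y z) + br y (br z x) + br z (br x y) = 0"
begin

lemma zero1[simp]: "br 0 y = 0"
  using add1[of 0 0 y] by simp
lemma zero2[simp]: "br x 0 = 0"
  using add2[of x 0 0] by simp
lemma neg1: "br (- x) y = - br x y"
proof -
  have "br x y + br (- x) y = 0" using add1[of x "-x" y] by simp
  then show ?thesis by (simp add: eq_neg_iff_add_eq_0 add.commute)
qed
lemma neg2: "br x (- y) = - br x y"
proof -
  have "br x y + br x (- y) = 0" using add2[of x y "-y"] by simp
  then show ?thesis by (simp add: eq_neg_iff_add_eq_0 add.commute)
qed
lemma diff1: "br (x - y) z = br x z - br y z"
  using add1[of x "-y" z] neg1 by simp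
lemma anti: "br x y = - br y x"
proof -
  have "0 = br (x+y) (x+y)" using alt by simp
  also have "\<dots> = br x y + br y x" unfolding add1 add2 by (simp add: alt)
  finally show ?thesis by (simp add: eq_neg_iff_add_eq_0)
qed
lemma sum1: "br (\<Sum>i\<in>S. f i) y = (\<Sum>i\<in>S. br (f i) y)"
  by (induction S rule: infinite_finite_induct) (auto simp: add1)
lemma sum2: "br y (\<Sum>i\<in>S. f i) = (\<Sum>i\<in>S. br y (f i))"
  by (induction S rule: infinite_finite_induct) (auto simp: add2)
lemma jac2: "br x (br y z) = br (br x y) z - br (br x z) y"
proof -
  have "br y (br z x) = br (br x z) y"
  proof -
    have "br y (br z x) = - br (br z x) y" by (rule anti)
    moreover have "br z x = - br x z" by (rule anti)
    ultimately show ?thesis by (simp add: neg1)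
  qed
  moreover have "br z (br x y) = - br (br x y) z" using anti by blast
  ultimately have "br x (br y z) + br (br x z) y - br (br x y) z = 0" using jac[of x y z] by simp
  then show ?thesis by (simp add: algebra_simps)
qed

definition "Aset \<sigma> = {\<pi>. \<pi> \<subseteq> \<sigma> \<and> \<pi> \<noteq> {} \<and> \<pi> \<noteq> \<sigma>}"
definition "Tset \<sigma> = {(\<pi>,\<rho>,\<tau>). \<pi> \<union> \<rho> \<union> \<tau> = \<sigma> \<and> \<pi> \<inter> \<rho> = {} \<and> \<pi> \<inter> \<tau> = {} \<and> \<rho> \<inter> \<tau> = {}
   \<and> \<pi> \<noteq> {} \<and> \<rho> \<noteq> {} \<and> \<tau> \<noteq> {}}"

lemma tbr_fin: "finite \<sigma> \<Longrightarrow> tbr br x y \<sigma> = (\<Sum>\<pi>\<in>Aset \<sigma>. br (x \<pi>) (y (\<sigma> - \<pi>)))"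
  by (simp add: tbr_def Aset_def)
lemma tbr_inf: "infinite \<sigma> \<Longrightarrow> tbr br x y \<sigma> = 0"
  by (simp add: tbr_def)
lemma Aset_fin: "finite \<sigma> \<Longrightarrow> finite (Aset \<sigma>)"
  unfolding Aset_def by (rule finite_subset[of _ "Pow \<sigma>"]) auto

lemma L1: assumes "finite \<sigma>"
  shows "tbr br x (tbr br p q) \<sigma> = (\<Sum>(\<pi>,\<rho>,\<tau>)\<in>Tset \<sigma>. br (x \<pi>) (br (p \<rho>) (q \<tau>)))"
proof -
  have "tbr br x (tbr br p q) \<sigma> = (\<Sum>\<pi>\<in>Aset \<sigma>. \<Sum>\<rho>\<in>Aset (\<sigma> - \<pi>). br (x \<pi>) (br (p \<rho>) (q (\<sigma> - \<pi> - \<rho>))))"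
    using assms by (simp add: tbr_fin sum2)
  also have "\<dots> = (\<Sum>(\<pi>,\<rho>)\<in>Sigma (Aset \<sigma>) (\<lambda>\<pi>. Aset (\<sigma> - \<pi>)). br (x \<pi>) (br (p \<rho>) (q (\<sigma> - \<pi> - \<rho>))))"
    using assms by (subst sum.Sigma) (auto simp: Aset_fin)
  also have "\<dots> = (\<Sum>(\<pi>,\<rho>,\<tau>)\<in>Tset \<sigma>. br (x \<pi>) (br (p \<rho>) (q \<tau>)))"
  proof -
    have bij: "bij_betw (\<lambda>(\<pi>, \<rho>). (\<pi>, \<rho>, \<sigma> - \<pi> - \<rho>)) (Sigma (Aset \<sigma>) (\<lambda>\<pi>. Aset (\<sigma> - \<pi>))) (Tset \<sigma>)"
      unfolding bij_betw_def
    proof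
      show "inj_on (\<lambda>(\<pi>, \<rho>). (\<pi>, \<rho>, \<sigma> - \<pi> - \<rho>)) (Sigma (Aset \<sigma>) (\<lambda>\<pi>. Aset (\<sigma> - \<pi>)))"
        by (auto simp: inj_on_def)
      show "(\<lambda>(\<pi>, \<rho>). (\<pi>, \<rho>, \<sigma> - \<pi> - \<rho>)) ` Sigma (Aset \<sigma>) (\<lambda>\<pi>. Aset (\<sigma> - \<pi>)) = Tset \<sigma>"
      proof
        show "(\<lambda>(\<pi>, \<rho>). (\<pi>, \<rho>, \<sigma> - \<pi> - \<rho>)) ` Sigma (Aset \<sigma>) (\<lambda>\<pi>. Aset (\<sigma> - \<pi>)) \<subseteq> Tset \<sigma>"
        proof (clarify)
          fix a b assume "a \<in> Aset \<sigma>" "b \<in> Aset (\<sigma> - a)"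
          then have h: "a \<subseteq> \<sigma>" "a \<noteq> {}" "a \<noteq> \<sigma>" "b \<subseteq> \<sigma> - a" "b \<noteq> {}" "b \<noteq> \<sigma> - a" by (auto simp: Aset_def)
          show "(a, b, \<sigma>-a-b) \<in> Tset \<sigma>" unfolding Tset_def using h by blast
        qed
        show "Tset \<sigma> \<subseteq> (\<lambda>(\<pi>, \<rho>). (\<pi>, \<rho>, \<sigma> - \<pi> - \<rho>)) ` Sigma (Aset \<sigma>) (\<lambda>\<pi>. Aset (\<sigma> - \<pi>))"
        proof (clarify)
          fix a b c assume "(a,b,c) \<in> Tset \<sigma>"
          then show "(a,b,c) \<in> (\<lambda>(\<pi>, \<rho>). (\<pi>, \<rho>, \<sigma> - \<pi> - \<rho>)) ` Sigma (Aset \<sigma>) (\<lambda>\<pi>. Aset (\<sigma> - \<pi>))"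
          proof -
            from \<open>(a,b,c) \<in> Tset \<sigma>\<close> have h: "a\<union>b\<union>c=\<sigma>" "a\<inter>b={}" "a\<inter>c={}" "b\<inter>c={}" "a\<noteq>{}" "b\<noteq>{}" "c\<noteq>{}"
              by (simp_all add: Tset_def)
            have "c = \<sigma>-a-b" using h by blast
            moreover have "a \<in> Aset \<sigma>" unfolding Aset_def using h by blast
            moreover have "b \<in> Aset (\<sigma>-a)" unfolding Aset_def using h by blast
            ultimately show ?thesis by (intro image_eqI[of _ _ "(a,b)"]) auto
          qed
        qed
      qed
    qed
    show ?thesis using sum.reindex_bij_betw[OF bij, where g="\<lambda>(\<pi>,\<rho>,\<tau>). br (x \<pi>) (br (p \<rho>) (q \<tau>))"]
      by (simp add: case_prod_unfold)
  qed
  finally show ?thesis .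
qed

lemma inj2: "inj_on (\<lambda>(\<alpha>,\<pi>). (\<pi>, \<alpha>-\<pi>, \<sigma>-(\<alpha>::nat set))) {(\<alpha>,\<pi>). \<pi> \<subseteq> \<alpha>}"
proof (rule inj_onI)
  fix x y assume x: "x \<in> {(\<alpha>,\<pi>). \<pi> \<subseteq> \<alpha>}" and y: "y \<in> {(\<alpha>,\<pi>). \<pi> \<subseteq> \<alpha>}"
    and e: "(\<lambda>(\<alpha>,\<pi>). (\<pi>, \<alpha>-\<pi>, \<sigma>-\<alpha>)) x = (\<lambda>(\<alpha>,\<pi>). (\<pi>, \<alpha>-\<pi>, \<sigma>-\<alpha>)) y"
  obtain a b where xa: "x = (a,b)" by (cases x)
  obtain c d where yc: "y = (c,d)" by (cases y)
  have "b \<subseteq> a" "d \<subseteq> c" using x y xa yc by auto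
  moreover have "b = d" "a - b = c - d" using e xa yc by auto
  ultimately have "a = c" by blast
  then show "x = y" using xa yc \<open>b = d\<close> by simp
qed

lemma L2: assumes "finite \<sigma>"
  shows "tbr br (tbr br x p) q \<sigma> = (\<Sum>(\<pi>,\<rho>,\<tau>)\<in>Tset \<sigma>. br (br (x \<pi>) (p \<rho>)) (q \<tau>))"
proof -
  have fa: "\<And>\<alpha>. \<alpha> \<in> Aset \<sigma> \<Longrightarrow> finite \<alpha>" using assms by (auto simp: Aset_def intro: finite_subset)
  have "tbr br (tbr br x p) q \<sigma> = (\<Sum>\<alpha>\<in>Aset \<sigma>. \<Sum>\<pi>\<in>Aset \<alpha>. br (br (x \<pi>) (p (\<alpha> - \<pi>))) (q (\<sigma> - \<alpha>)))"
    using assms fa by (simp add: tbr_fin sum1)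
  also have "\<dots> = (\<Sum>(\<alpha>,\<pi>)\<in>Sigma (Aset \<sigma>) Aset. br (br (x \<pi>) (p (\<alpha> - \<pi>))) (q (\<sigma> - \<alpha>)))"
    using assms fa by (subst sum.Sigma) (auto simp: Aset_fin)
  also have "\<dots> = (\<Sum>(\<pi>,\<rho>,\<tau>)\<in>Tset \<sigma>. br (br (x \<pi>) (p \<rho>)) (q \<tau>))"
  proof -
    have bij: "bij_betw (\<lambda>(\<alpha>,\<pi>). (\<pi>,\<alpha>-\<pi>,\<sigma>-\<alpha>)) (Sigma (Aset \<sigma>) Aset) (Tset \<sigma>)"
      unfolding bij_betw_def
    proof
      show "inj_on (\<lambda>(\<alpha>,\<pi>). (\<pi>,\<alpha>-\<pi>,\<sigma>-\<alpha>)) (Sigma (Aset \<sigma>) Aset)"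
      proof (rule inj_on_subset[OF inj2])
        show "Sigma (Aset \<sigma>) Aset \<subseteq> {(\<alpha>,\<pi>). \<pi> \<subseteq> \<alpha>}" by (auto simp: Aset_def)
      qed
      show "(\<lambda>(\<alpha>,\<pi>). (\<pi>,\<alpha>-\<pi>,\<sigma>-\<alpha>)) ` Sigma (Aset \<sigma>) Aset = Tset \<sigma>"
      proof
        show "(\<lambda>(\<alpha>,\<pi>). (\<pi>,\<alpha>-\<pi>,\<sigma>-\<alpha>)) ` Sigma (Aset \<sigma>) Aset \<subseteq> Tset \<sigma>"
        proof (clarify)
          fix a b assume "a \<in> Aset \<sigma>" "b \<in> Aset a"
          then have h: "a \<subseteq> \<sigma>" "a \<noteq> {}" "a \<noteq> \<sigma>" "b \<subseteq> a" "b \<noteq> {}" "b \<noteq> a" by (auto simp: Aset_def)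
          show "(b, a-b, \<sigma>-a) \<in> Tset \<sigma>" unfolding Tset_def using h by blast
        qed
        show "Tset \<sigma> \<subseteq> (\<lambda>(\<alpha>,\<pi>). (\<pi>,\<alpha>-\<pi>,\<sigma>-\<alpha>)) ` Sigma (Aset \<sigma>) Aset"
        proof (clarify)
          fix a b c assume "(a,b,c) \<in> Tset \<sigma>"
          then show "(a,b,c) \<in> (\<lambda>(\<alpha>,\<pi>). (\<pi>,\<alpha>-\<pi>,\<sigma>-\<alpha>)) ` Sigma (Aset \<sigma>) Aset"
          proof -
            from \<open>(a,b,c) \<in> Tset \<sigma>\<close> have h: "a\<union>b\<union>c=\<sigma>" "a\<inter>b={}" "a\<inter>c={}" "b\<inter>c={}" "a\<noteq>{}" "b\<noteq>{}" "c\<noteq>{}"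
              by (simp_all add: Tset_def)
            have "c = \<sigma>-(a\<union>b)" "b = (a\<union>b)-a" using h by blast+
            moreover have "a\<union>b \<in> Aset \<sigma>" unfolding Aset_def using h by blast
            moreover have "a \<in> Aset (a\<union>b)" unfolding Aset_def using h by blast
            ultimately show ?thesis by (intro image_eqI[of _ _ "(a\<union>b,a)"]) auto
          qed
        qed
      qed
    qed
    show ?thesis using sum.reindex_bij_betw[OF bij, where g="\<lambda>(\<pi>,\<rho>,\<tau>). br (br (x \<pi>) (p \<rho>)) (q \<tau>)"]
      by (simp add: case_prod_unfold)
  qed
  finally show ?thesis .
qed

lemma Tmem: "(a,b,c) \<in> Tset \<sigma> \<Longrightarrow> (a,c,b) \<in> Tset \<sigma>"
  unfolding Tset_def by (simp only: mem_Collect_eq prod.case) blast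

lemma Tswap: "(\<Sum>(\<pi>,\<rho>,\<tau>)\<in>Tset \<sigma>. f \<pi> \<rho> \<tau>) = (\<Sum>(\<pi>,\<rho>,\<tau>)\<in>Tset \<sigma>. f \<pi> \<tau> \<rho>)"
proof -
  have bij: "bij_betw (\<lambda>(\<pi>,\<rho>,\<tau>). (\<pi>,\<tau>,\<rho>)) (Tset \<sigma>) (Tset \<sigma>)"
    by (rule bij_betw_byWitness[where f'="\<lambda>(\<pi>,\<rho>,\<tau>). (\<pi>,\<tau>,\<rho>)"]) (auto intro: Tmem)
  show ?thesis using sum.reindex_bij_betw[OF bij, where g="\<lambda>(\<pi>,\<rho>,\<tau>). f \<pi> \<rho> \<tau>"]
    by (simp add: case_prod_unfold)
qed

lemma tjac: "tbr br x (tbr br p q) = (\<lambda>\<sigma>. tbr br (tbr br x p) q \<sigma> - tbr br (tbr br x q) p \<sigma>)"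
proof
  fix \<sigma>
  show "tbr br x (tbr br p q) \<sigma> = tbr br (tbr br x p) q \<sigma> - tbr br (tbr br x q) p \<sigma>"
  proof (cases "finite \<sigma>")
    case True
    have e3: "tbr br (tbr br x q) p \<sigma> = (\<Sum>(\<pi>,\<rho>,\<tau>)\<in>Tset \<sigma>. br (br (x \<pi>) (q \<tau>)) (p \<rho>))"
      unfolding L2[OF True] by (rule Tswap[where f="\<lambda>\<pi> \<rho> \<tau>. br (br (x \<pi>) (q \<rho>)) (p \<tau>)"])
    have "tbr br (tbr br x p) q \<sigma> - tbr br (tbr br x q) p \<sigma> =
       (\<Sum>t\<in>Tset \<sigma>. (case t of (\<pi>,\<rho>,\<tau>) \<Rightarrow> br (br (x \<pi>) (p \<rho>)) (q \<tau>)) - (case t of (\<pi>,\<rho>,\<tau>) \<Rightarrow> br (br (x \<pi>) (q \<tau>)) (p \<rho>)))"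
      by (simp only: e3 L2[OF True, of x p q] sum_subtractf)
    also have "\<dots> = (\<Sum>(\<pi>,\<rho>,\<tau>)\<in>Tset \<sigma>. br (x \<pi>) (br (p \<rho>) (q \<tau>)))"
      by (rule sum.cong) (auto simp: jac2)
    finally show ?thesis unfolding L1[OF True] by simp
  qed (simp add: tbr_inf)
qed

lemma tbr_sum2: "tbr br x (\<lambda>\<pi>. \<Sum>i\<in>S. f i \<pi>) \<sigma> = (\<Sum>i\<in>S. tbr br x (f i) \<sigma>)"
proof (cases "finite \<sigma>")
  case True
  then show ?thesis by (simp add: tbr_fin sum2 sum.swap[of _ S])
qed (simp add: tbr_inf)

lemma tbr_sum1: "tbr br (\<lambda>\<pi>. \<Sum>i\<in>S. f i \<pi>) y \<sigma> = (\<Sum>i\<in>S. tbr br (f i) y \<sigma>)"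
proof (cases "finite \<sigma>")
  case True
  then show ?thesis by (simp add: tbr_fin sum1 sum.swap[of _ S])
qed (simp add: tbr_inf)

lemma tbr_diff1: "tbr br (\<lambda>\<pi>. f \<pi> - g \<pi>) y \<sigma> = tbr br f y \<sigma> - tbr br g y \<sigma>"
proof (cases "finite \<sigma>")
  case True
  then show ?thesis by (simp add: tbr_fin diff1 sum_subtractf)
qed (simp add: tbr_inf)

lemma tbr_zero1: "tbr br (\<lambda>_. 0) y = (\<lambda>_. 0)"
  by (rule ext) (simp add: tbr_def)
lemma tbr_zero2: "tbr br x (\<lambda>_. 0) = (\<lambda>_. 0)"
  by (rule ext) (simp add: tbr_def)

lemma W: assumes "ad_in_Dtilde br b n" "n \<notin> \<alpha>" shows "tbr br x b \<alpha> = 0"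
proof (cases "finite \<alpha>")
  case True
  have "\<And>\<pi>. br (x \<pi>) (b (\<alpha> - \<pi>)) = 0"
  proof -
    fix \<pi>
    have "n \<notin> \<alpha> - \<pi>" using assms(2) by blast
    then have "(\<lambda>y. br y (b (\<alpha> - \<pi>))) = (\<lambda>y. 0)" using assms(1) by (simp add: ad_in_Dtilde_def)
    then show "br (x \<pi>) (b (\<alpha> - \<pi>)) = 0" by metis
  qed
  then show ?thesis using True by (simp add: tbr_fin)
qed (simp add: tbr_inf)

lemma Wz: assumes "\<And>\<pi>. \<pi> \<subseteq> \<alpha> \<Longrightarrow> y \<pi> = 0" shows "tbr br y c \<alpha> = 0"
proof (cases "finite \<alpha>")
  case True
  then show ?thesis using assms by (simp add: tbr_fin Aset_def)
qed (simp add: tbr_inf)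

lemma Vz: assumes "ad_in_Dtilde br b n" "\<And>\<alpha>. n \<notin> \<alpha> \<Longrightarrow> y \<alpha> = 0" shows "tbr br y b = (\<lambda>_. 0)"
proof
  fix \<sigma>
  show "tbr br y b \<sigma> = 0"
  proof (cases "finite \<sigma>")
    case True
    have "\<And>\<alpha>. br (y \<alpha>) (b (\<sigma> - \<alpha>)) = 0"
    proof -
      fix \<alpha>
      show "br (y \<alpha>) (b (\<sigma> - \<alpha>)) = 0"
      proof (cases "n \<in> \<sigma> - \<alpha>")
        case True
        then have "n \<notin> \<alpha>" by blast
        then show ?thesis using assms(2) by simp
      next
        case False
        then have "(\<lambda>y. br y (b (\<sigma> - \<alpha>))) = (\<lambda>y. 0)" using assms(1) by (simp add: ad_in_Dtilde_def)
        then show ?thesis by metis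
      qed
    qed
    then show ?thesis using True by (simp add: tbr_fin)
  qed (simp add: tbr_inf)
qed

lemma DD: assumes "ad_in_Dtilde br b n" shows "tbr br (tbr br x b) b = (\<lambda>_. 0)"
  by (rule Vz[OF assms]) (rule W[OF assms])

lemma DcD: assumes "ad_in_Dtilde br b n" shows "tbr br (tbr br (tbr br x b) c) b = (\<lambda>_. 0)"
proof (rule Vz[OF assms])
  fix \<alpha> assume "n \<notin> \<alpha>"
  show "tbr br (tbr br x b) c \<alpha> = 0"
    by (rule Wz) (use W[OF assms] \<open>n \<notin> \<alpha>\<close> in blast)
qed

lemma tl_tbr: assumes "tl_elem x" "tl_elem y" shows "tl_elem (tbr br x y)"
proof -
  have sub: "{\<sigma>. tbr br x y \<sigma> \<noteq> 0} \<subseteq> (\<lambda>(\<pi>,\<rho>). \<pi> \<union> \<rho>) ` ({\<pi>. x \<pi> \<noteq> 0} \<times> {\<rho>. y \<rho> \<noteq> 0})"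
    and ne: "\<And>\<sigma>. tbr br x y \<sigma> \<noteq> 0 \<Longrightarrow> finite \<sigma> \<and> \<sigma> \<noteq> {}"
  proof -
    have key: "\<exists>\<pi>. x \<pi> \<noteq> 0 \<and> y (\<sigma> - \<pi>) \<noteq> 0 \<and> \<pi> \<subseteq> \<sigma> \<and> \<pi> \<noteq> {} \<and> finite \<sigma>" if h: "tbr br x y \<sigma> \<noteq> 0" for \<sigma>
    proof -
      have f: "finite \<sigma>" using h tbr_inf by blast
      then have "(\<Sum>\<pi>\<in>Aset \<sigma>. br (x \<pi>) (y (\<sigma> - \<pi>))) \<noteq> 0" using h by (simp add: tbr_fin)
      then obtain \<pi> where p: "\<pi> \<in> Aset \<sigma>" "br (x \<pi>) (y (\<sigma> - \<pi>)) \<noteq> 0"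
        using sum.not_neutral_contains_not_neutral by blast
      have "x \<pi> \<noteq> 0" using p(2) by (metis zero1)
      moreover have "y (\<sigma> - \<pi>) \<noteq> 0" using p(2) by (metis zero2)
      ultimately show ?thesis using p(1) f by (auto simp: Aset_def)
    qed
    show "{\<sigma>. tbr br x y \<sigma> \<noteq> 0} \<subseteq> (\<lambda>(\<pi>,\<rho>). \<pi> \<union> \<rho>) ` ({\<pi>. x \<pi> \<noteq> 0} \<times> {\<rho>. y \<rho> \<noteq> 0})"
    proof
      fix \<sigma> assume "\<sigma> \<in> {\<sigma>. tbr br x y \<sigma> \<noteq> 0}"
      then obtain \<pi> where "x \<pi> \<noteq> 0" "y (\<sigma> - \<pi>) \<noteq> 0" "\<pi> \<subseteq> \<sigma>" using key by blast
      then show "\<sigma> \<in> (\<lambda>(\<pi>,\<rho>). \<pi> \<union> \<rho>) ` ({\<pi>. x \<pi> \<noteq> 0} \<times> {\<rho>. y \<rho> \<noteq> 0})"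
        by (intro image_eqI[of _ _ "(\<pi>, \<sigma> - \<pi>)"]) auto
    qed
    fix \<sigma> assume "tbr br x y \<sigma> \<noteq> 0"
    then show "finite \<sigma> \<and> \<sigma> \<noteq> {}" using key by blast
  qed
  have "finite {\<pi>. x \<pi> \<noteq> 0}" "finite {\<rho>. y \<rho> \<noteq> 0}" using assms by (auto simp: tl_elem_def)
  then have "finite {\<sigma>. tbr br x y \<sigma> \<noteq> 0}" using sub finite_subset by blast
  then show ?thesis using ne by (simp add: tl_elem_def)
qed

lemma Jid: "tbr br x (tbr br (tbr br c u) v) \<sigma> = tbr br (tbr br (tbr br x c) u) v \<sigma> - tbr br (tbr br (tbr br x u) c) v \<sigma>
   - (tbr br (tbr br (tbr br x v) c) u \<sigma> - tbr br (tbr br (tbr br x v) u) c \<sigma>)"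
proof -
  have "tbr br x (tbr br (tbr br c u) v) \<sigma> = tbr br (tbr br x (tbr br c u)) v \<sigma> - tbr br (tbr br x v) (tbr br c u) \<sigma>"
    by (simp only: tjac[of x "tbr br c u" v])
  also have "tbr br (tbr br x (tbr br c u)) v \<sigma> = tbr br (tbr br (tbr br x c) u) v \<sigma> - tbr br (tbr br (tbr br x u) c) v \<sigma>"
    by (simp only: tjac[of x c u] tbr_diff1)
  also have "tbr br (tbr br x v) (tbr br c u) \<sigma> = tbr br (tbr br (tbr br x v) c) u \<sigma> - tbr br (tbr br (tbr br x v) u) c \<sigma>"
    by (simp only: tjac[of "tbr br x v" c u])
  finally show ?thesis .
qed

end

definition "Pairs I = {(i,j). i \<in> I \<and> j \<in> I \<and> (i::nat) < j}"

lemma Uk2: "Uk 2 I d x \<sigma> = (\<Sum>(i,j)\<in>Pairs I. d i (d j x) \<sigma>)"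
proof -
  have bij: "bij_betw (\<lambda>(i,j). {i,j}) (Pairs I) {S. S \<subseteq> I \<and> card S = 2}"
    unfolding bij_betw_def
  proof
    show "inj_on (\<lambda>(i,j). {i,j}) (Pairs I)"
      by (auto simp: inj_on_def Pairs_def doubleton_eq_iff)
    show "(\<lambda>(i,j). {i,j}) ` Pairs I = {S. S \<subseteq> I \<and> card S = 2}"
    proof
      show "(\<lambda>(i,j). {i,j}) ` Pairs I \<subseteq> {S. S \<subseteq> I \<and> card S = 2}"
        by (auto simp: Pairs_def)
      show "{S. S \<subseteq> I \<and> card S = 2} \<subseteq> (\<lambda>(i,j). {i,j}) ` Pairs I"
      proof
        fix S assume "S \<in> {S. S \<subseteq> I \<and> card S = 2}"
        then obtain a c where S: "S = {a,c}" "a \<noteq> c" "S \<subseteq> I" by (auto simp: card_2_iff)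
        show "S \<in> (\<lambda>(i,j). {i,j}) ` Pairs I"
          using S by (intro image_eqI[of _ _ "(min a c, max a c)"]) (auto simp: Pairs_def min_def max_def)
      qed
    qed
  qed
  have "Uk 2 I d x \<sigma> = (\<Sum>S\<in>{S. S \<subseteq> I \<and> card S = 2}. foldr (\<circ>) (map d (sorted_list_of_set S)) id x \<sigma>)"
    by (simp add: Uk_def)
  also have "\<dots> = (\<Sum>p\<in>Pairs I. (\<lambda>S. foldr (\<circ>) (map d (sorted_list_of_set S)) id x \<sigma>) ((\<lambda>(i,j). {i,j}) p))"
    by (rule sum.reindex_bij_betw[OF bij, symmetric])
  also have "\<dots> = (\<Sum>(i,j)\<in>Pairs I. d i (d j x) \<sigma>)"
  proof (rule sum.cong)
    fix p assume "p \<in> Pairs I"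
    then obtain i j where p: "p = (i,j)" "i < j" by (auto simp: Pairs_def)
    have "sorted_list_of_set {i,j} = [i,j]" using p(2) by simp
    then show "(\<lambda>S. foldr (\<circ>) (map d (sorted_list_of_set S)) id x \<sigma>) ((\<lambda>(i,j). {i,j}) p) = (case p of (i,j) \<Rightarrow> d i (d j x) \<sigma>)"
      using p by simp
  qed simp
  finally show ?thesis .
qed

lemma split_sq:
  fixes g :: "nat \<Rightarrow> nat \<Rightarrow> 'a::comm_monoid_add"
  assumes "finite I"
  shows "(\<Sum>i\<in>I. \<Sum>j\<in>I. g i j) = (\<Sum>i\<in>I. g i i) + (\<Sum>(i,j)\<in>Pairs I. g i j + g j i)"
proof -
  let ?D = "(\<lambda>i. (i,i)) ` I" and ?P = "Pairs I" and ?Q = "prod.swap ` Pairs I"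
  have fP: "finite ?P"
  proof (rule finite_subset[of _ "I \<times> I"])
    show "?P \<subseteq> I \<times> I" by (auto simp: Pairs_def)
  qed (use assms in simp)
  have II: "I \<times> I = ?D \<union> (?P \<union> ?Q)"
  proof
    show "I \<times> I \<subseteq> ?D \<union> (?P \<union> ?Q)"
    proof
      fix p assume "p \<in> I \<times> I"
      then obtain i j where p: "p = (i,j)" "i \<in> I" "j \<in> I" by blast
      consider "i < j" | "j < i" | "i = j" by linarith
      then show "p \<in> ?D \<union> (?P \<union> ?Q)"
      proof cases
        case 1 then show ?thesis using p by (auto simp: Pairs_def)
      next
        case 2
        then have "(j,i) \<in> ?P" using p by (auto simp: Pairs_def)
        then have "prod.swap (j,i) \<in> ?Q" by blast
        then show ?thesis using p by simp
      next
        case 3 then show ?thesis using p by auto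
      qed
    qed
  qed (auto simp: Pairs_def)
  have "(\<Sum>i\<in>I. \<Sum>j\<in>I. g i j) = (\<Sum>(i,j)\<in>I \<times> I. g i j)"
    by (simp add: sum.cartesian_product)
  also have "\<dots> = (\<Sum>(i,j)\<in>?D. g i j) + (\<Sum>(i,j)\<in>?P \<union> ?Q. g i j)"
    unfolding II using assms fP by (intro sum.union_disjoint) (auto simp: Pairs_def)
  also have "(\<Sum>(i,j)\<in>?P \<union> ?Q. g i j) = (\<Sum>(i,j)\<in>?P. g i j) + (\<Sum>(i,j)\<in>?Q. g i j)"
    using fP by (intro sum.union_disjoint) (auto simp: Pairs_def)
  also have "(\<Sum>(i,j)\<in>?Q. g i j) = (\<Sum>(i,j)\<in>?P. g j i)"
    by (subst sum.reindex) (auto simp: inj_on_def case_prod_unfold)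
  also have "(\<Sum>(i,j)\<in>?D. g i j) = (\<Sum>i\<in>I. g i i)"
    by (subst sum.reindex) (auto simp: inj_on_def)
  finally show ?thesis by (simp add: sum.distrib case_prod_unfold)
qed

theorem lemma12:
  fixes sc :: "'k::field \<Rightarrow> 'l::ab_group_add \<Rightarrow> 'l"
    and br :: "'l \<Rightarrow> 'l \<Rightarrow> 'l"
    and I :: "nat set" and b :: "nat \<Rightarrow> nat set \<Rightarrow> 'l"
  assumes "lie_algebra sc br"
    and "finite I"
    and "\<forall>i\<in>I. tl_elem (b i)"
    and U1: "\<forall>i\<in>I. \<exists>n. ad_in_Dtilde br (b i) n"
    and U2: "\<forall>i\<in>I. \<forall>j\<in>I. \<forall>x. tl_elem x \<longrightarrow>
               tad br (b i) (tad br (b j) x) = tad br (b j) (tad br (b i) x)"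
    and "\<forall>x. tl_elem x \<longrightarrow> Uk 2 I (\<lambda>i. tad br (b i)) x = (\<lambda>_. 0)"
  shows "tsandwich br (\<lambda>\<pi>. \<Sum>i\<in>I. b i \<pi>)"
proof -
  have "brl br" using assms(1) unfolding lie_algebra_def brl_def by blast
  then interpret brl br .
  define a where "a = (\<lambda>\<pi>. \<Sum>i\<in>I. b i \<pi>)"
  have fI: "finite I" by fact
  have nn: "\<And>i. i \<in> I \<Longrightarrow> \<exists>n. ad_in_Dtilde br (b i) n" using U1 by blast
  have U2': "\<And>i j (y::nat set \<Rightarrow> 'l). i \<in> I \<Longrightarrow> j \<in> I \<Longrightarrow> tl_elem y \<Longrightarrow>
      tbr br (tbr br y (b j)) (b i) = tbr br (tbr br y (b i)) (b j)"
    using U2 by (simp add: tad_def)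
  have Uk0: "\<And>(y::nat set \<Rightarrow> 'l) \<sigma>. tl_elem y \<Longrightarrow> (\<Sum>(i,j)\<in>Pairs I. tbr br (tbr br y (b j)) (b i) \<sigma>) = 0"
  proof -
    fix y :: "nat set \<Rightarrow> 'l" and \<sigma> assume "tl_elem y"
    then have "Uk 2 I (\<lambda>i. tad br (b i)) y \<sigma> = 0" using assms(6) by simp
    then show "(\<Sum>(i,j)\<in>Pairs I. tbr br (tbr br y (b j)) (b i) \<sigma>) = 0"
      by (simp add: Uk2 tad_def)
  qed
  have UkS: "\<And>(y::nat set \<Rightarrow> 'l) \<sigma>. tl_elem y \<Longrightarrow> (\<Sum>(i,j)\<in>Pairs I. tbr br (tbr br y (b i)) (b j) \<sigma>) = 0"
  proof -
    fix y :: "nat set \<Rightarrow> 'l" and \<sigma> assume y: "tl_elem y"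
    have "(\<Sum>(i,j)\<in>Pairs I. tbr br (tbr br y (b i)) (b j) \<sigma>) = (\<Sum>(i,j)\<in>Pairs I. tbr br (tbr br y (b j)) (b i) \<sigma>)"
      by (rule sum.cong) (auto simp: Pairs_def U2'[OF _ _ y])
    then show "(\<Sum>(i,j)\<in>Pairs I. tbr br (tbr br y (b i)) (b j) \<sigma>) = 0" using Uk0[OF y] by simp
  qed
  have xa: "\<And>x::nat set \<Rightarrow> 'l. tbr br x a = (\<lambda>\<sigma>. \<Sum>i\<in>I. tbr br x (b i) \<sigma>)"
    unfolding a_def by (rule ext) (rule tbr_sum2)
  have P1: "tbr br (tbr br x a) a \<sigma> = 0" if x: "tl_elem x" for x :: "nat set \<Rightarrow> 'l" and \<sigma>
  proof -
    let ?g = "\<lambda>j i. tbr br (tbr br x (b i)) (b j) \<sigma>"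
    have "tbr br (tbr br x a) a \<sigma> = (\<Sum>j\<in>I. \<Sum>i\<in>I. ?g j i)"
      unfolding xa[of "tbr br x a"] unfolding xa[of x] by (simp add: tbr_sum1)
    also have "\<dots> = (\<Sum>i\<in>I. ?g i i) + (\<Sum>(i,j)\<in>Pairs I. ?g i j + ?g j i)"
      by (rule split_sq[OF fI])
    also have "(\<Sum>i\<in>I. ?g i i) = 0"
    proof (rule sum.neutral, rule ballI)
      fix i assume "i \<in> I"
      then obtain n where "ad_in_Dtilde br (b i) n" using nn by blast
      then show "?g i i = 0" using DD by metis
    qed
    also have "(\<Sum>(i,j)\<in>Pairs I. ?g i j + ?g j i) = 0"
      using Uk0[OF x, of \<sigma>] UkS[OF x, of \<sigma>] by (simp add: sum.distrib case_prod_unfold)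
    finally show ?thesis by simp
  qed
  have P2: "tbr br (tbr br (tbr br x a) c) a \<sigma> = 0" if x: "tl_elem x" and c: "tl_elem c" for x c :: "nat set \<Rightarrow> 'l" and \<sigma>
  proof -
    let ?h = "\<lambda>j i. tbr br (tbr br (tbr br x (b i)) c) (b j) \<sigma>"
    have xac: "tbr br (tbr br x a) c = (\<lambda>\<tau>. \<Sum>i\<in>I. tbr br (tbr br x (b i)) c \<tau>)"
      unfolding xa[of x] by (rule ext) (rule tbr_sum1)
    have "tbr br (tbr br (tbr br x a) c) a \<sigma> = (\<Sum>j\<in>I. \<Sum>i\<in>I. ?h j i)"
      unfolding xa[of "tbr br (tbr br x a) c"] unfolding xac by (simp add: tbr_sum1)
    also have "\<dots> = (\<Sum>i\<in>I. ?h i i) + (\<Sum>(i,j)\<in>Pairs I. ?h i j + ?h j i)"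
      by (rule split_sq[OF fI])
    also have "(\<Sum>i\<in>I. ?h i i) = 0"
    proof (rule sum.neutral, rule ballI)
      fix i assume "i \<in> I"
      then obtain n where "ad_in_Dtilde br (b i) n" using nn by blast
      then show "?h i i = 0" using DcD by metis
    qed
    also have "(\<Sum>(i,j)\<in>Pairs I. ?h i j + ?h j i) =
       (\<Sum>(i,j)\<in>Pairs I. tbr br (tbr br (tbr br x c) (b i)) (b j) \<sigma>)
       + (\<Sum>(i,j)\<in>Pairs I. tbr br (tbr br (tbr br x (b j)) (b i)) c \<sigma>)
       - (\<Sum>(i,j)\<in>Pairs I. tbr br x (tbr br (tbr br c (b i)) (b j)) \<sigma>)"
    proof -
      have "(\<Sum>(i,j)\<in>Pairs I. ?h i j + ?h j i) = (\<Sum>(i,j)\<in>Pairs I.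
         tbr br (tbr br (tbr br x c) (b i)) (b j) \<sigma> + tbr br (tbr br (tbr br x (b j)) (b i)) c \<sigma>
         - tbr br x (tbr br (tbr br c (b i)) (b j)) \<sigma>)"
      proof (rule sum.cong[OF refl], clarify)
        fix i j
        show "?h i j + ?h j i = tbr br (tbr br (tbr br x c) (b i)) (b j) \<sigma> + tbr br (tbr br (tbr br x (b j)) (b i)) c \<sigma>
         - tbr br x (tbr br (tbr br c (b i)) (b j)) \<sigma>"
          using Jid[of x c "b i" "b j" \<sigma>] by (simp add: algebra_simps)
      qed
      then show ?thesis by (simp add: sum.distrib sum_subtractf case_prod_unfold)
    qed
    also have "(\<Sum>(i,j)\<in>Pairs I. tbr br (tbr br (tbr br x c) (b i)) (b j) \<sigma>) = 0"
      by (rule UkS[OF tl_tbr[OF x c]])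
    also have "(\<Sum>(i,j)\<in>Pairs I. tbr br (tbr br (tbr br x (b j)) (b i)) c \<sigma>) = 0"
    proof -
      have "(\<Sum>(i,j)\<in>Pairs I. tbr br (tbr br (tbr br x (b j)) (b i)) c \<sigma>)
          = tbr br (\<lambda>\<tau>. \<Sum>p\<in>Pairs I. (case p of (i,j) \<Rightarrow> tbr br (tbr br x (b j)) (b i)) \<tau>) c \<sigma>"
        by (simp only: tbr_sum1) (simp add: case_prod_unfold)
      also have "(\<lambda>\<tau>. \<Sum>p\<in>Pairs I. (case p of (i,j) \<Rightarrow> tbr br (tbr br x (b j)) (b i)) \<tau>) = (\<lambda>_. 0)"
        using Uk0[OF x] by (simp add: case_prod_unfold)
      finally show ?thesis by (simp add: tbr_zero1)
    qed
    also have "(\<Sum>(i,j)\<in>Pairs I. tbr br x (tbr br (tbr br c (b i)) (b j)) \<sigma>) = 0"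
    proof -
      have "(\<Sum>(i,j)\<in>Pairs I. tbr br x (tbr br (tbr br c (b i)) (b j)) \<sigma>)
          = tbr br x (\<lambda>\<tau>. \<Sum>p\<in>Pairs I. (case p of (i,j) \<Rightarrow> tbr br (tbr br c (b i)) (b j)) \<tau>) \<sigma>"
        by (simp only: tbr_sum2) (simp add: case_prod_unfold)
      also have "(\<lambda>\<tau>. \<Sum>p\<in>Pairs I. (case p of (i,j) \<Rightarrow> tbr br (tbr br c (b i)) (b j)) \<tau>) = (\<lambda>_. 0)"
        using UkS[OF c] by (simp add: case_prod_unfold)
      finally show ?thesis by (simp add: tbr_zero2)
    qed
    finally show ?thesis by simp
  qed
  show ?thesis
    unfolding tsandwich_def a_def[symmetric] tad_def using P1 P2 by auto
qed

end
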